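(* Let $\tau$ be a critical GW tree ($\mu=1$) with offspring distribution $p$ satisfying ( * ). Let $(\alpha_n,n\in\mathbb N)$ be a sequence of positive integers such that for every $j\in\mathbb N^*$, \[\lim_{n\to\infty}\frac{\mathbb P(\mathcal G_{n-j}(\tau)=\alpha_n)}{\mathbb P(\mathcal G_n(\tau)=\alpha_n)}=1.\] Then the conditional law of $\tau$ given $\{\mathcal G_n(\tau)=\alpha_n\}$ converges in distribution to the law of Kesten's tree $\tau^*$ as $n\to\infty$.
   Context: Trees (Neveu formalism): $\mathcal U=\bigcup_{n\ge0}(\mathbb N^* )^n$, $|u|$ the length of $u$. A tree is $\mathbf t\subset\mathcal U$ with $\emptyset\in\mathbf t$, closed under taking prefixes, and such that for every $u\in\mathbf t$ there is $k_u(\mathbf t)\ge0$ with $ui\in\mathbf t\iff1\le i\le k_u(\mathbf t)$. $\mathcal G_n(\mathbf t)=\mathrm{Card}\{u\in\mathbf t:|u|=n\}$ is the size of generation $n$. $r_h(\mathbf t)=\{u\in\mathbf t:|u|\le h\}$; convergence in distribution of random trees $T_n\to T$ means $\mathbb P(r_h(T_n)=\mathbf t)\to\mathbb P(r_h(T)=\mathbf t)$ for all $h$ and $\mathbf t$. Offspring distribution: a probability $p$ on $\mathbb N$ satisfying ( * ): $p(0)>0$, $p(0)+p(1)<1$, $\mu=\sum_n np(n)<\infty$. A GW tree $\tau$ with offspring distribution $p$ satisfies $\mathbb P(r_h(\tau)=\mathbf t)=\prod_{u\in r_{h-1}(\mathbf t)}p(k_u(\mathbf t))$ for all $h\ge1$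 and trees $\mathbf t$ of height $\le h$. Kesten's tree $\tau^*$ (for $\mu\le1$): with $p^*(n)=np(n)/\mu$, $\tau^*$ is a random tree with a random sequence $(V_k)_{k\ge1}$, $V_1\cdots V_h\in\tau^*$ for all $h$, constructed recursively: given $(V_1,\dots,V_h)$ and $r_h(\tau^* )$, the numbers of children of the vertices $v$ with $|v|=h$ are independent, with law $p$ if $v\ne V_1\cdots V_h$ and $p^*$ if $v=V_1\cdots V_h$; then $V_{h+1}$ is uniform on $\{1,\dots,k_{V_1\cdots V_h}(\tau^* )\}$. *)

theory Defs
  imports "HOL-Probability.Probability"
begin

text \<open>Neveu formalism: vertices are finite words over the positive integers,
  represented as lists of naturals all of whose entries are at least 1.
  A tree is a set of such words.\<close>

type_synonym tree = "nat list set"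

definition is_tree :: "tree \<Rightarrow> bool" where
  "is_tree t \<longleftrightarrow>
     [] \<in> t
   \<and> (\<forall>u\<in>t. \<forall>x\<in>set u. 1 \<le> x)
   \<and> (\<forall>u w. u @ w \<in> t \<longrightarrow> u \<in> t)
   \<and> (\<forall>u\<in>t. \<exists>k::nat. \<forall>i. (u @ [i] \<in> t \<longleftrightarrow> 1 \<le> i \<and> i \<le> k))"

definition kids :: "tree \<Rightarrow> nat list \<Rightarrow> nat" where
  "kids t u = card {i. u @ [i] \<in> t}"

definition gen :: "nat \<Rightarrow> tree \<Rightarrow> nat" where
  "gen n t = card {u\<in>t. length u = n}"

definition restr :: "nat \<Rightarrow> tree \<Rightarrow> tree" where
  "restr h t = {u\<in>t. length u \<le> h}"

definition height_le :: "tree \<Rightarrow> nat \<Rightarrow> bool" where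
  "height_le t h \<longleftrightarrow> (\<forall>u\<in>t. length u \<le> h)"

text \<open>Offspring distributions satisfying (*).\<close>
definition offspring_mean :: "(nat \<Rightarrow> real) \<Rightarrow> real" where
  "offspring_mean p = (\<Sum>n. real n * p n)"

definition offspring_dist :: "(nat \<Rightarrow> real) \<Rightarrow> bool" where
  "offspring_dist p \<longleftrightarrow>
     (\<forall>n. 0 \<le> p n) \<and> p sums 1
   \<and> p 0 > 0 \<and> p 0 + p 1 < 1
   \<and> summable (\<lambda>n. real n * p n)"

definition size_biased :: "(nat \<Rightarrow> real) \<Rightarrow> nat \<Rightarrow> real" where
  "size_biased p n = real n * p n / offspring_mean p"

definition is_GW_tree :: "'w measure \<Rightarrow> ('w \<Rightarrow> tree) \<Rightarrow> (nat \<Rightarrow> real) \<Rightarrow> bool" where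
  "is_GW_tree M T p \<longleftrightarrow>
     prob_space M
   \<and> (\<forall>\<omega>\<in>space M. is_tree (T \<omega>))
   \<and> (\<forall>h t. {\<omega>\<in>space M. restr h (T \<omega>) = t} \<in> sets M)
   \<and> (\<forall>n a. {\<omega>\<in>space M. gen n (T \<omega>) = a} \<in> sets M)
   \<and> (\<forall>h t. 1 \<le> h \<longrightarrow> is_tree t \<longrightarrow> height_le t h \<longrightarrow>
        measure M {\<omega>\<in>space M. restr h (T \<omega>) = t}
          = (\<Prod>u\<in>restr (h - 1) t. p (kids t u)))"

text \<open>Kesten's tree (T, V) on the probability space M, with spine
  V_1 V_2 ... (V k for k \<ge> 1).  The recursive construction is encoded by the
  joint law of (r_h(T), V_1 ... V_h) that it produces: a vertex u with |u| < h
  has k_u children with probability p(k_u) if it is off the spine, and with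
  probability p*(k_u) if it is the spine vertex V_1...V_|u|, in which case the
  next spine index V_{|u|+1} is chosen uniformly, i.e. with probability 1/k_u.\<close>
definition spine :: "(nat \<Rightarrow> nat) \<Rightarrow> nat \<Rightarrow> nat list" where
  "spine V h = map V [1..<Suc h]"

definition is_Kesten_tree ::
  "'w measure \<Rightarrow> ('w \<Rightarrow> tree) \<Rightarrow> ('w \<Rightarrow> nat \<Rightarrow> nat) \<Rightarrow> (nat \<Rightarrow> real) \<Rightarrow> bool" where
  "is_Kesten_tree M T V p \<longleftrightarrow>
     prob_space M
   \<and> (\<forall>\<omega>\<in>space M. is_tree (T \<omega>))
   \<and> (\<forall>\<omega>\<in>space M. \<forall>h. spine (V \<omega>) h \<in> T \<omega>)
   \<and> (\<forall>h t. {\<omega>\<in>space M. restr h (T \<omega>) = t} \<in> sets M)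
   \<and> (\<forall>h t v. {\<omega>\<in>space M. restr h (T \<omega>) = t \<and> spine (V \<omega>) h = v} \<in> sets M)
   \<and> (\<forall>h t v. 1 \<le> h \<longrightarrow> is_tree t \<longrightarrow> height_le t h \<longrightarrow> v \<in> t \<longrightarrow> length v = h \<longrightarrow>
        measure M {\<omega>\<in>space M. restr h (T \<omega>) = t \<and> spine (V \<omega>) h = v}
          = (\<Prod>u\<in>restr (h - 1) t.
               if u = take (length u) v
               then size_biased p (kids t u) * (1 / real (kids t u))
               else p (kids t u)))"

end

theory Submission
  imports Defs
begin


lemma is_treeD:
  assumes "is_tree t"
  shows "[] \<in> t" "\<forall>u\<in>t. \<forall>x\<in>set u. 1 \<le> x" "\<forall>u w. u @ w \<in> t \<longrightarrow> u \<in> t"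
    "\<forall>u\<in>t. \<exists>k::nat. \<forall>i. (u @ [i] \<in> t \<longleftrightarrow> 1 \<le> i \<and> i \<le> k)"
  using assms by (simp_all add: is_tree_def)

lemma kids_iff:
  assumes "is_tree t" "u \<in> t"
  shows "u @ [i] \<in> t \<longleftrightarrow> 1 \<le> i \<and> i \<le> kids t u"
proof -
  have "\<exists>k::nat. \<forall>i. (u @ [i] \<in> t \<longleftrightarrow> 1 \<le> i \<and> i \<le> k)"
    using is_treeD(4)[OF assms(1)] assms(2) by (rule bspec)
  then obtain k where k0: "\<forall>i. (u @ [i] \<in> t \<longleftrightarrow> 1 \<le> i \<and> i \<le> k)" ..
  hence k: "\<And>i. u @ [i] \<in> t \<longleftrightarrow> 1 \<le> i \<and> i \<le> k" by (rule spec)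
  have "{i. u @ [i] \<in> t} = {1..k}" by (simp add: k set_eq_iff)
  hence "kids t u = k" by (simp add: kids_def)
  thus ?thesis using k by simp
qed

lemma tree_prefix: "is_tree t \<Longrightarrow> u @ w \<in> t \<Longrightarrow> u \<in> t"
  using is_treeD(3) by blast

lemma tree_Nil: "is_tree t \<Longrightarrow> [] \<in> t"
  using is_treeD(1) by blast

lemma finite_levels:
  assumes "is_tree t"
  shows "finite {u\<in>t. length u \<le> h}"
proof (induction h)
  case 0
  have "{u\<in>t. length u \<le> 0} \<subseteq> {[]}" by auto
  thus ?case by (rule finite_subset) simp
next
  case (Suc h)
  let ?A = "{u\<in>t. length u \<le> h}"
  have "{u\<in>t. length u \<le> Suc h} \<subseteq> ?A \<union> (\<Union>v\<in>?A. (\<lambda>i. v @ [i]) ` {1..kids t v})"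
  proof
    fix u assume u: "u \<in> {u\<in>t. length u \<le> Suc h}"
    show "u \<in> ?A \<union> (\<Union>v\<in>?A. (\<lambda>i. v @ [i]) ` {1..kids t v})"
    proof (cases "length u \<le> h")
      case True thus ?thesis using u by auto
    next
      case False
      hence "u \<noteq> []" by auto
      hence ue: "u = butlast u @ [last u]" by simp
      hence bt: "butlast u \<in> t" using u tree_prefix[OF assms, of "butlast u" "[last u]"] by auto
      have "last u \<in> {1..kids t (butlast u)}"
        using kids_iff[OF assms bt, of "last u"] u ue by auto
      moreover have "butlast u \<in> ?A" using bt u by auto
      ultimately show ?thesis using ue by blast
    qed
  qed
  moreover have "finite (?A \<union> (\<Union>v\<in>?A. (\<lambda>i. v @ [i]) ` {1..kids t v}))"
    using Suc by auto
  ultimately show ?case by (rule finite_subset)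
qed

lemma finite_tree: "is_tree t \<Longrightarrow> height_le t h \<Longrightarrow> finite t"
proof -
  assume a: "is_tree t" "height_le t h"
  have "t = {u\<in>t. length u \<le> h}" using a(2) unfolding height_le_def by auto
  thus "finite t" using finite_levels[OF a(1), of h] by metis
qed

lemma restr_tree:
  assumes "is_tree t" shows "is_tree (restr h t)"
  unfolding is_tree_def
proof (intro conjI)
  show "[] \<in> restr h t" using tree_Nil[OF assms] by (simp add: restr_def)
  show "\<forall>u\<in>restr h t. \<forall>x\<in>set u. 1 \<le> x" using is_treeD[OF assms] by (auto simp: restr_def)
  show "\<forall>u w. u @ w \<in> restr h t \<longrightarrow> u \<in> restr h t" using is_treeD[OF assms] by (auto simp: restr_def)
  show "\<forall>u\<in>restr h t. \<exists>k. \<forall>i. (u @ [i] \<in> restr h t) = (1 \<le> i \<and> i \<le> k)"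
  proof
    fix u assume u: "u \<in> restr h t"
    show "\<exists>k. \<forall>i. (u @ [i] \<in> restr h t) = (1 \<le> i \<and> i \<le> k)"
    proof (cases "length u < h")
      case True
      thus ?thesis using u kids_iff[OF assms] by (auto simp: restr_def)
    next
      case False
      thus ?thesis using u by (intro exI[of _ 0]) (auto simp: restr_def)
    qed
  qed
qed

lemma restr_height: "height_le (restr h t) h"
  by (auto simp: restr_def height_le_def)

lemma gen_restr: "n \<le> h \<Longrightarrow> gen n (restr h t) = gen n t"
  unfolding gen_def restr_def by (rule arg_cong[where f=card]) auto

lemma restr_restr: "h \<le> h' \<Longrightarrow> restr h (restr h' t) = restr h t"
  unfolding restr_def by auto

lemma tree_height0: "is_tree t \<Longrightarrow> height_le t 0 \<Longrightarrow> t = {[]}"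
  using tree_Nil by (auto simp: height_le_def)

lemma restr0: "is_tree t \<Longrightarrow> restr 0 t = {[]}"
  using tree_Nil by (auto simp: restr_def)



definition ext :: "tree \<Rightarrow> nat \<Rightarrow> (nat list \<Rightarrow> nat) \<Rightarrow> tree" where
  "ext t h c = t \<union> {v @ [i] | v i. v \<in> t \<and> length v = h \<and> 1 \<le> i \<and> i \<le> c v}"

definition Qh :: "(nat \<Rightarrow> real) \<Rightarrow> nat \<Rightarrow> tree \<Rightarrow> real" where
  "Qh p h t = (\<Prod>u\<in>{u\<in>t. length u < h}. p (kids t u))"

context
  fixes t h
  assumes tr: "is_tree t" and ht: "height_le t h"
begin

lemma t_len: "u \<in> t \<Longrightarrow> length u \<le> h"
  using ht by (auto simp: height_le_def)

lemma ext_new_notin: "v \<in> t \<Longrightarrow> length v = h \<Longrightarrow> v @ [i] \<notin> t"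
  using t_len[of "v @ [i]"] by auto

lemma kids_ext_L: "v \<in> t \<Longrightarrow> length v = h \<Longrightarrow> kids (ext t h c) v = c v"
proof -
  assume v: "v \<in> t" "length v = h"
  have "{i. v @ [i] \<in> ext t h c} = {1..c v}"
    using v ext_new_notin[OF v] by (auto simp: ext_def)
  thus ?thesis by (simp add: kids_def)
qed

lemma kids_ext_in: "u \<in> t \<Longrightarrow> length u < h \<Longrightarrow> kids (ext t h c) u = kids t u"
proof -
  assume u: "u \<in> t" "length u < h"
  have "{i. u @ [i] \<in> ext t h c} = {i. u @ [i] \<in> t}"
    using u by (auto simp: ext_def)
  thus ?thesis by (simp add: kids_def)
qed

lemma ext_tree: "is_tree (ext t h c)"
  unfolding is_tree_def
proof (intro conjI)
  show "[] \<in> ext t h c" using tree_Nil[OF tr] by (simp add: ext_def)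
  show "\<forall>u\<in>ext t h c. \<forall>x\<in>set u. 1 \<le> x" using tr by (auto simp: ext_def is_tree_def)
  show "\<forall>u w. u @ w \<in> ext t h c \<longrightarrow> u \<in> ext t h c"
  proof (intro allI impI)
    fix u w assume a: "u @ w \<in> ext t h c"
    show "u \<in> ext t h c"
    proof (cases "u @ w \<in> t")
      case True thus ?thesis using tree_prefix[OF tr] by (auto simp: ext_def)
    next
      case False
      then obtain v i where vi: "u @ w = v @ [i]" "v \<in> t" "length v = h" "1 \<le> i" "i \<le> c v"
        using a by (auto simp: ext_def)
      show ?thesis
      proof (cases "w = []")
        case True thus ?thesis using a by simp
      next
        case False
        hence "w = butlast w @ [last w]" by simp
        hence "u @ butlast w @ [last w] = v @ [i]" using vi(1) by metis
        hence "u @ butlast w = v" by simp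
        hence "u \<in> t" using tree_prefix[OF tr] vi(2) by blast
        thus ?thesis by (simp add: ext_def)
      qed
    qed
  qed
  show "\<forall>u\<in>ext t h c. \<exists>k. \<forall>i. (u @ [i] \<in> ext t h c) = (1 \<le> i \<and> i \<le> k)"
  proof
    fix u assume u: "u \<in> ext t h c"
    show "\<exists>k. \<forall>i. (u @ [i] \<in> ext t h c) = (1 \<le> i \<and> i \<le> k)"
    proof (cases "u \<in> t")
      case True
      show ?thesis
      proof (cases "length u < h")
        case True
        have "\<And>i. (u @ [i] \<in> ext t h c) = (u @ [i] \<in> t)" using True \<open>u \<in> t\<close> by (auto simp: ext_def)
        thus ?thesis using kids_iff[OF tr \<open>u \<in> t\<close>] by auto
      next
        case False
        hence "length u = h" using t_len[OF \<open>u \<in> t\<close>] by simp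
        hence "\<And>i. (u @ [i] \<in> ext t h c) = (1 \<le> i \<and> i \<le> c u)"
          using \<open>u \<in> t\<close> ext_new_notin by (auto simp: ext_def)
        thus ?thesis by blast
      qed
    next
      case False
      then obtain v i where vi: "u = v @ [i]" "v \<in> t" "length v = h"
        using u by (auto simp: ext_def)
      have "\<And>j. u @ [j] \<notin> ext t h c" using vi by (auto simp: ext_def dest: t_len)
      thus ?thesis by (intro exI[of _ 0]) auto
    qed
  qed
qed

lemma ext_height: "height_le (ext t h c) (Suc h)"
  by (auto simp: height_le_def ext_def dest: t_len)

lemma ext_restr: "restr h (ext t h c) = t"
  using t_len by (auto simp: restr_def ext_def)

abbreviation "L \<equiv> {v\<in>t. length v = h}"

lemma finite_t: "finite t" using finite_tree[OF tr ht] .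

lemma finite_L: "finite L" using finite_t by simp

lemma gen_ext: "gen (Suc h) (ext t h c) = (\<Sum>v\<in>L. c v)"
proof -
  have "{u\<in>ext t h c. length u = Suc h} = (\<Union>v\<in>L. (\<lambda>i. v @ [i]) ` {1..c v})"
    by (auto simp: ext_def dest: t_len)
  hence "gen (Suc h) (ext t h c) = card (\<Union>v\<in>L. (\<lambda>i. v @ [i]) ` {1..c v})"
    by (simp add: gen_def)
  also have "\<dots> = (\<Sum>v\<in>L. card ((\<lambda>i. v @ [i]) ` {1..c v}))"
    using finite_L by (intro card_UN_disjoint) auto
  also have "\<dots> = (\<Sum>v\<in>L. c v)"
    by (intro sum.cong refl) (simp add: card_image inj_on_def)
  finally show ?thesis .
qed

lemma Qh_ext: "Qh p (Suc h) (ext t h c) = Qh p h t * (\<Prod>v\<in>L. p (c v))"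
proof -
  have e: "{u\<in>ext t h c. length u < Suc h} = {u\<in>t. length u < h} \<union> L"
    using t_len by (auto simp: ext_def)
  have "Qh p (Suc h) (ext t h c) = (\<Prod>u\<in>{u\<in>t. length u < h} \<union> L. p (kids (ext t h c) u))"
    unfolding Qh_def e ..
  also have "\<dots> = (\<Prod>u\<in>{u\<in>t. length u < h}. p (kids (ext t h c) u)) * (\<Prod>u\<in>L. p (kids (ext t h c) u))"
    using finite_t by (intro prod.union_disjoint) auto
  also have "\<dots> = Qh p h t * (\<Prod>v\<in>L. p (c v))"
    unfolding Qh_def using kids_ext_in kids_ext_L by (intro arg_cong2[where f="(*)"] prod.cong) auto
  finally show ?thesis .
qed

lemma ext_surj:
  assumes s: "is_tree s" "height_le s (Suc h)" "restr h s = t"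
  shows "s = ext t h (\<lambda>v. if v \<in> L then kids s v else 0)"
proof
  show "s \<subseteq> ext t h (\<lambda>v. if v \<in> L then kids s v else 0)"
  proof
    fix u assume u: "u \<in> s"
    show "u \<in> ext t h (\<lambda>v. if v \<in> L then kids s v else 0)"
    proof (cases "length u \<le> h")
      case True thus ?thesis using u s(3) by (auto simp: ext_def restr_def)
    next
      case False
      hence lu: "length u = Suc h" using s(2) u by (auto simp: height_le_def)
      hence "u \<noteq> []" by auto
      hence ue: "u = butlast u @ [last u]" by simp
      hence bs: "butlast u \<in> s" using u tree_prefix[OF s(1), of "butlast u" "[last u]"] by auto
      have bt: "butlast u \<in> L" using bs lu s(3) by (auto simp: restr_def)
      have "1 \<le> last u \<and> last u \<le> kids s (butlast u)"
        using kids_iff[OF s(1) bs, of "last u"] u ue by auto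
      thus ?thesis using bt ue unfolding ext_def by auto
    qed
  qed
  show "ext t h (\<lambda>v. if v \<in> L then kids s v else 0) \<subseteq> s"
  proof
    fix u assume u: "u \<in> ext t h (\<lambda>v. if v \<in> L then kids s v else 0)"
    show "u \<in> s"
    proof (cases "u \<in> t")
      case True thus ?thesis using s(3) by (auto simp: restr_def)
    next
      case False
      then obtain v i where vi: "u = v @ [i]" "v \<in> L" "1 \<le> i" "i \<le> kids s v"
        using u by (auto simp: ext_def)
      have "v \<in> s" using vi(2) s(3) by (auto simp: restr_def)
      thus ?thesis using kids_iff[OF s(1) \<open>v \<in> s\<close>, of i] vi by auto
    qed
  qed
qed

lemma ext_bij:
  "bij_betw (ext t h) {c. \<forall>x. x \<notin> L \<longrightarrow> c x = 0}
     {s. is_tree s \<and> height_le s (Suc h) \<and> restr h s = t}"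
  unfolding bij_betw_def
proof
  show "inj_on (ext t h) {c. \<forall>x. x \<notin> L \<longrightarrow> c x = 0}"
  proof (rule inj_onI)
    fix c c' assume c: "c \<in> {c. \<forall>x. x \<notin> L \<longrightarrow> c x = 0}" "c' \<in> {c. \<forall>x. x \<notin> L \<longrightarrow> c x = 0}"
      and e: "ext t h c = ext t h c'"
    show "c = c'"
    proof
      fix x show "c x = c' x"
      proof (cases "x \<in> L")
        case True
        thus ?thesis using kids_ext_L[of x c] kids_ext_L[of x c'] e by auto
      next
        case False thus ?thesis using c by auto
      qed
    qed
  qed
  show "ext t h ` {c. \<forall>x. x \<notin> L \<longrightarrow> c x = 0} = {s. is_tree s \<and> height_le s (Suc h) \<and> restr h s = t}"
  proof
    show "ext t h ` {c. \<forall>x. x \<notin> L \<longrightarrow> c x = 0} \<subseteq> {s. is_tree s \<and> height_le s (Suc h) \<and> restr h s = t}"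
      using ext_tree ext_height ext_restr by auto
    show "{s. is_tree s \<and> height_le s (Suc h) \<and> restr h s = t} \<subseteq> ext t h ` {c. \<forall>x. x \<notin> L \<longrightarrow> c x = 0}"
    proof
      fix s assume "s \<in> {s. is_tree s \<and> height_le s (Suc h) \<and> restr h s = t}"
      hence "s = ext t h (\<lambda>v. if v \<in> L then kids s v else 0)" using ext_surj by auto
      thus "s \<in> ext t h ` {c. \<forall>x. x \<notin> L \<longrightarrow> c x = 0}" by (intro image_eqI) auto
    qed
  qed
qed

end



definition conv :: "nat pmf \<Rightarrow> nat pmf \<Rightarrow> nat pmf" where
  "conv X Y = bind_pmf X (\<lambda>x. bind_pmf Y (\<lambda>y. return_pmf (x + y)))"

fun Kp :: "nat pmf \<Rightarrow> nat \<Rightarrow> nat pmf" where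
  "Kp P 0 = return_pmf 0"
| "Kp P (Suc k) = conv P (Kp P k)"

fun Gm :: "nat pmf \<Rightarrow> nat \<Rightarrow> nat \<Rightarrow> nat pmf" where
  "Gm P 0 k = return_pmf k"
| "Gm P (Suc m) k = bind_pmf (Kp P k) (Gm P m)"

lemma conv_map: "conv X Y = map_pmf (\<lambda>(x,y). x + y) (pair_pmf X Y)"
  by (simp add: conv_def map_pmf_def pair_pmf_def bind_assoc_pmf bind_return_pmf)

lemma conv_0_left [simp]: "conv (return_pmf 0) X = X"
  by (simp add: conv_def bind_return_pmf bind_return_pmf')

lemma conv_0_right [simp]: "conv X (return_pmf 0) = X"
  by (simp add: conv_def bind_return_pmf bind_return_pmf')

lemma conv_return: "conv (return_pmf a) (return_pmf b) = return_pmf (a + b)"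
  by (simp add: conv_def bind_return_pmf)

lemma conv_assoc: "conv (conv X Y) Z = conv X (conv Y Z)"
  by (simp add: conv_def bind_assoc_pmf bind_return_pmf add.assoc)

lemma conv_comm: "conv X Y = conv Y X"
  unfolding conv_def by (subst bind_commute_pmf) (simp add: add.commute)

lemma Kp_add: "Kp P (j + k) = conv (Kp P j) (Kp P k)"
  by (induction j) (simp_all add: conv_assoc)

lemma Kp_1: "Kp P (Suc 0) = P"
  by simp

lemma bind_conv: "bind_pmf (conv X Y) F = bind_pmf X (\<lambda>x. bind_pmf Y (\<lambda>y. F (x + y)))"
  by (simp add: conv_def bind_assoc_pmf bind_return_pmf)

lemma conv_bind2:
  "conv (bind_pmf A F) (bind_pmf B G) = bind_pmf A (\<lambda>x. bind_pmf B (\<lambda>y. conv (F x) (G y)))"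
proof -
  have "conv (bind_pmf A F) (bind_pmf B G) =
     bind_pmf A (\<lambda>x. bind_pmf (F x) (\<lambda>a. bind_pmf B (\<lambda>y. bind_pmf (G y) (\<lambda>b. return_pmf (a + b)))))"
    by (simp add: conv_def bind_assoc_pmf)
  also have "\<dots> = bind_pmf A (\<lambda>x. bind_pmf B (\<lambda>y. bind_pmf (F x) (\<lambda>a. bind_pmf (G y) (\<lambda>b. return_pmf (a + b)))))"
    by (intro bind_pmf_cong refl) (rule bind_commute_pmf)
  also have "\<dots> = bind_pmf A (\<lambda>x. bind_pmf B (\<lambda>y. conv (F x) (G y)))"
    by (simp add: conv_def)
  finally show ?thesis .
qed

lemma Gm_add: "Gm P m (j + k) = conv (Gm P m j) (Gm P m k)"
proof (induction m arbitrary: j k)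
  case 0 thus ?case by (simp add: conv_return)
next
  case (Suc m)
  have "Gm P (Suc m) (j + k) = bind_pmf (conv (Kp P j) (Kp P k)) (Gm P m)"
    by (simp add: Kp_add)
  also have "\<dots> = bind_pmf (Kp P j) (\<lambda>x. bind_pmf (Kp P k) (\<lambda>y. conv (Gm P m x) (Gm P m y)))"
    by (simp add: bind_conv Suc)
  also have "\<dots> = conv (Gm P (Suc m) j) (Gm P (Suc m) k)"
    by (simp add: conv_bind2)
  finally show ?case .
qed

lemma Gm_semi: "Gm P (h + m) k = bind_pmf (Gm P h k) (\<lambda>x. Gm P m x)"
proof (induction h arbitrary: k)
  case 0 thus ?case by (simp add: bind_return_pmf)
next
  case (Suc h)
  have "Gm P (Suc h + m) k = bind_pmf (Kp P k) (\<lambda>x. Gm P (h + m) x)" by simp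
  also have "\<dots> = bind_pmf (Kp P k) (\<lambda>x. bind_pmf (Gm P h x) (\<lambda>y. Gm P m y))"
    using Suc.IH by simp
  also have "\<dots> = bind_pmf (Gm P (Suc h) k) (\<lambda>x. Gm P m x)"
    by (simp add: bind_assoc_pmf)
  finally show ?case .
qed

lemma Gm_zero: "Gm P m 0 = return_pmf 0"
  by (induction m) (simp_all add: bind_return_pmf)

lemma Gm_Suc1: "Gm P (Suc m) (Suc 0) = bind_pmf P (Gm P m)"
  by simp

lemma pmf_conv_0: "pmf (conv X Y) 0 = pmf X 0 * pmf Y 0"
proof -
  have "(\<lambda>(x,y). x + y) -` {0::nat} = {(0,0)}" by auto
  thus ?thesis by (simp add: conv_map pmf_map measure_pmf_single pmf_pair)
qed

lemma pmf_conv_ge: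
  assumes "a \<noteq> 0"
  shows "pmf X a * pmf Y 0 + pmf X 0 * pmf Y a \<le> pmf (conv X Y) a"
proof -
  have "pmf (conv X Y) a = measure (pair_pmf X Y) ((\<lambda>(x,y). x + y) -` {a})"
    by (simp add: conv_map pmf_map)
  also have "\<dots> \<ge> measure (pair_pmf X Y) {(a,0),(0,a)}"
    by (intro measure_pmf.finite_measure_mono) auto
  also have "measure (pair_pmf X Y) {(a,0),(0,a)} = pmf X a * pmf Y 0 + pmf X 0 * pmf Y a"
    using assms by (subst measure_measure_pmf_finite) (auto simp: pmf_pair)
  finally show ?thesis by simp
qed

lemma Gm_pmf0: "pmf (Gm P m k) 0 = pmf (Gm P m (Suc 0)) 0 ^ k"
proof (induction k)
  case 0 thus ?case by (simp add: Gm_zero)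
next
  case (Suc k)
  have "Gm P m (Suc k) = conv (Gm P m k) (Gm P m (Suc 0))" using Gm_add[of P m k 1] by simp
  thus ?case using Suc by (simp add: pmf_conv_0)
qed

lemma Gm_lower:
  assumes "a \<noteq> 0"
  shows "real k * pmf (Gm P m (Suc 0)) a * pmf (Gm P m (Suc 0)) 0 ^ (k - 1) \<le> pmf (Gm P m k) a"
proof (induction k)
  case 0 thus ?case by simp
next
  case (Suc k)
  let ?g = "pmf (Gm P m (Suc 0)) a" and ?z = "pmf (Gm P m (Suc 0)) 0"
  have z0: "0 \<le> ?z" "0 \<le> ?g" by simp_all
  have "Gm P m (Suc k) = conv (Gm P m k) (Gm P m (Suc 0))" using Gm_add[of P m k 1] by simp
  hence "pmf (Gm P m k) a * ?z + pmf (Gm P m k) 0 * ?g \<le> pmf (Gm P m (Suc k)) a"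
    using pmf_conv_ge[OF assms, of "Gm P m k" "Gm P m (Suc 0)"] by simp
  moreover have "real k * ?g * ?z ^ (k - 1) * ?z + ?z ^ k * ?g = real (Suc k) * ?g * ?z ^ (Suc k - 1)"
  proof (cases k)
    case 0 thus ?thesis by simp
  next
    case (Suc k') thus ?thesis by (simp add: algebra_simps)
  qed
  moreover have "real k * ?g * ?z ^ (k - 1) * ?z \<le> pmf (Gm P m k) a * ?z"
    using Suc z0 by (intro mult_right_mono) auto
  moreover have "pmf (Gm P m k) 0 * ?g = ?z ^ k * ?g" using Gm_pmf0[of P m k] by simp
  ultimately show ?case by linarith
qed

lemma nn_conv_mean:
  "(\<integral>\<^sup>+x. ennreal (real x) \<partial>conv X Y) = (\<integral>\<^sup>+x. ennreal (real x) \<partial>X) + (\<integral>\<^sup>+x. ennreal (real x) \<partial>Y)"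
proof -
  have "(\<integral>\<^sup>+x. ennreal (real x) \<partial>conv X Y) =
        (\<integral>\<^sup>+x. (\<integral>\<^sup>+y. ennreal (real x) + ennreal (real y) \<partial>Y) \<partial>X)"
    by (simp add: conv_def ennreal_plus[symmetric] del: ennreal_plus)
  also have "\<dots> = (\<integral>\<^sup>+x. ennreal (real x) + (\<integral>\<^sup>+y. ennreal (real y) \<partial>Y) \<partial>X)"
    by (intro nn_integral_cong) (simp add: nn_integral_add measure_pmf.emeasure_space_1)
  also have "\<dots> = (\<integral>\<^sup>+x. ennreal (real x) \<partial>X) + (\<integral>\<^sup>+y. ennreal (real y) \<partial>Y)"
    by (simp add: nn_integral_add measure_pmf.emeasure_space_1)
  finally show ?thesis .
qed

lemma Kp_mean:
  fixes P :: "nat pmf"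
  assumes "(\<integral>\<^sup>+x. ennreal (real x) \<partial>P) = 1"
  shows "(\<integral>\<^sup>+x. ennreal (real x) \<partial>Kp P k) = ennreal (real k)"
proof (induction k)
  case 0 thus ?case by simp
next
  case (Suc k)
  thus ?case by (simp add: nn_conv_mean assms)
qed

lemma Gm_mean:
  fixes P :: "nat pmf"
  assumes "(\<integral>\<^sup>+x. ennreal (real x) \<partial>P) = 1"
  shows "(\<integral>\<^sup>+x. ennreal (real x) \<partial>Gm P m k) = ennreal (real k)"
proof (induction m arbitrary: k)
  case 0 thus ?case by simp
next
  case (Suc m)
  thus ?case by (simp add: Kp_mean[OF assms])
qed



lemma int_bounded:
  fixes P :: "nat pmf" and f :: "nat \<Rightarrow> real" and B :: real
  assumes "\<And>c. \<bar>f c\<bar> \<le> B"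
  shows "integrable (measure_pmf P) f"
  using assms by (intro measure_pmf.integrable_const_bound[where B=B]) auto

lemma pow_lower:
  fixes q :: real
  assumes "0 \<le> q" "q \<le> 1"
  shows "1 - real c * (1 - q) + (if 2 \<le> c then (1 - q)^2 else 0) \<le> q ^ c"
proof (induction c)
  case 0 thus ?case by simp
next
  case (Suc c)
  let ?d = "1 - q"
  show ?case
  proof (cases "c \<le> 1")
    case True
    then consider "c = 0" | "c = 1" by linarith
    thus ?thesis by cases (simp_all add: power2_eq_square algebra_simps)
  next
    case False
    hence c2: "2 \<le> c" by simp
    have IH: "1 - real c * ?d + ?d^2 \<le> q ^ c" using Suc c2 by simp
    have "q * (1 - real c * ?d + ?d^2) \<le> q * q ^ c" using IH assms by (intro mult_left_mono) auto
    moreover have "1 - real (Suc c) * ?d + ?d^2 \<le> q * (1 - real c * ?d + ?d^2)"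
    proof -
      have "q * (1 - real c * ?d + ?d^2) - (1 - real (Suc c) * ?d + ?d^2) = ?d^2 * (real c - ?d)"
        by (simp add: power2_eq_square algebra_simps)
      moreover have "0 \<le> ?d^2 * (real c - ?d)" using assms c2 by (intro mult_nonneg_nonneg) auto
      ultimately show ?thesis by linarith
    qed
    ultimately show ?thesis using c2 by simp
  qed
qed

lemma extinction:
  fixes P :: "nat pmf"
  assumes mean: "(\<integral>\<^sup>+x. ennreal (real x) \<partial>P) = 1"
    and nd: "pmf P 0 + pmf P 1 < 1"
  shows "(\<lambda>m. pmf (Gm P m (Suc 0)) 0) \<longlonglongrightarrow> 1"
proof -
  define z where "z m = pmf (Gm P m (Suc 0)) 0" for m
  define f where "f s = measure_pmf.expectation P (\<lambda>c. s ^ c)" for s :: real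
  have zS: "z (Suc m) = f (z m)" for m
    unfolding z_def f_def Gm_Suc1 pmf_bind by (rule Bochner_Integration.integral_cong[OF refl]) (rule Gm_pmf0)
  have z01: "0 \<le> z m" "z m \<le> 1" for m unfolding z_def by (simp_all add: pmf_le_1)
  have intf: "integrable (measure_pmf P) (\<lambda>c. s ^ c)" if "0 \<le> s" "s \<le> 1" for s :: real
    using that by (intro int_bounded[where B=1]) (simp add: power_le_one)
  have fmono: "f s \<le> f t" if "0 \<le> s" "s \<le> t" "t \<le> 1" for s t :: real
    unfolding f_def using that intf
    by (intro integral_mono) (auto intro: power_mono)
  have zmono: "z m \<le> z (Suc m)" for m
  proof (induction m)
    case 0 thus ?case using z01[of 1] by (simp add: z_def)
  next
    case (Suc m)
    have "f (z m) \<le> f (z (Suc m))" using Suc z01 by (intro fmono) auto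
    thus ?case by (simp add: zS)
  qed
  hence inc: "incseq z" by (rule incseq_SucI)
  have bdd: "bdd_above (range z)" using z01 by (intro bdd_aboveI[where M=1]) auto
  define q where "q = (SUP m. z m)"
  have zq: "z \<longlonglongrightarrow> q" unfolding q_def using LIMSEQ_incseq_SUP[OF bdd inc] .
  have q01: "0 \<le> q" "q \<le> 1"
    using LIMSEQ_le_const[OF zq, of 0] LIMSEQ_le_const2[OF zq, of 1] z01 by auto
  have "(\<lambda>m. f (z m)) \<longlonglongrightarrow> f q"
    unfolding f_def
  proof (rule integral_dominated_convergence[where w="\<lambda>_. 1"])
    show "AE c in measure_pmf P. (\<lambda>m. z m ^ c) \<longlonglongrightarrow> q ^ c"
      using zq by (intro AE_I2 tendsto_power)
    show "\<And>m. AE c in measure_pmf P. norm (z m ^ c) \<le> 1"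
      using z01 by (intro AE_I2) (simp add: power_le_one)
  qed auto
  moreover have "(\<lambda>m. f (z m)) \<longlonglongrightarrow> q"
    using LIMSEQ_Suc[OF zq] by (simp add: zS)
  ultimately have fq: "f q = q" using LIMSEQ_unique by blast
  show ?thesis
  proof (rule ccontr)
    assume "\<not> ?thesis"
    hence "q \<noteq> 1" using zq unfolding z_def by auto
    hence q1: "q < 1" using q01 by simp
    define d where "d = 1 - q"
    have d: "0 < d" "d \<le> 1" using q1 q01 by (auto simp: d_def)
    have intc: "integrable (measure_pmf P) (\<lambda>c. real c)"
      by (rule integrableI_nonneg) (auto simp: mean)
    have Ec: "measure_pmf.expectation P (\<lambda>c. real c) = 1"
    proof -
      have "ennreal (measure_pmf.expectation P (\<lambda>c. real c)) = 1"
        using nn_integral_eq_integral[OF intc] mean by simp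
      thus ?thesis by simp
    qed
    define A where "A = {c::nat. 2 \<le> c}"
    have EA: "measure_pmf.expectation P (indicator A :: nat \<Rightarrow> real) = 1 - (pmf P 0 + pmf P 1)"
    proof -
      have eqA: "A = UNIV - {0,1}" by (auto simp: A_def)
      have "measure_pmf.expectation P (indicator A :: nat \<Rightarrow> real) = measure P A" by simp
      also have "\<dots> = 1 - measure P {0,1}"
        unfolding eqA using measure_pmf.prob_compl[of "{0,1}" P] by simp
      also have "measure P {0,1} = pmf P 0 + pmf P 1"
        by (subst measure_measure_pmf_finite) auto
      finally show ?thesis .
    qed
    have intA: "integrable (measure_pmf P) (indicator A :: nat \<Rightarrow> real)"
      by (rule int_bounded[where B=1]) (simp add: indicator_def)
    have "measure_pmf.expectation P (\<lambda>c. 1 - real c * d + d^2 * indicator A c) \<le> f q"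
      unfolding f_def
    proof (rule integral_mono)
      show "integrable (measure_pmf P) (\<lambda>c. 1 - real c * d + d\<^sup>2 * indicator A c)"
        using intc intA by auto
      show "integrable (measure_pmf P) (\<lambda>c. q ^ c)" using intf q01 by auto
      fix c
      show "1 - real c * d + d\<^sup>2 * indicator A c \<le> q ^ c"
        using pow_lower[OF q01, of c] by (auto simp: d_def A_def indicator_def)
    qed
    moreover have "measure_pmf.expectation P (\<lambda>c. 1 - real c * d + d^2 * indicator A c)
        = 1 - d + d^2 * (1 - (pmf P 0 + pmf P 1))"
      using intc intA EA by (simp add: Ec One_nat_def)
    moreover have "0 < d^2 * (1 - (pmf P 0 + pmf P 1))" using d nd by simp
    ultimately have "q < f q" by (simp add: d_def)
    thus False using fq by simp
  qed
qed



definition offp :: "(nat \<Rightarrow> real) \<Rightarrow> nat pmf" where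
  "offp p = embed_pmf p"

lemma pmf_offp:
  assumes "offspring_dist p"
  shows "pmf (offp p) n = p n"
proof -
  have nn: "\<And>n. 0 \<le> p n" and s: "p sums 1" using assms by (auto simp: offspring_dist_def)
  have "(\<integral>\<^sup>+x. ennreal (p x) \<partial>count_space UNIV) = 1"
    using suminf_ennreal_eq[OF nn s] by (simp add: nn_integral_count_space_nat)
  thus ?thesis unfolding offp_def by (intro pmf_embed_pmf nn)
qed

lemma Ksum:
  fixes A :: "'a set"
  assumes "finite A"
  shows "map_pmf (\<lambda>c. \<Sum>v\<in>A. c v) (Pi_pmf A 0 (\<lambda>_. P)) = Kp P (card A)"
  using assms
proof (induction A rule: finite_induct)
  case empty thus ?case by simp
next
  case (insert x F)
  have "map_pmf (\<lambda>c. \<Sum>v\<in>insert x F. c v) (Pi_pmf (insert x F) 0 (\<lambda>_. P))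
      = map_pmf (\<lambda>(y, f). \<Sum>v\<in>insert x F. (f(x := y)) v) (pair_pmf P (Pi_pmf F 0 (\<lambda>_. P)))"
    using insert by (simp add: Pi_pmf_insert map_pmf_comp case_prod_beta')
  also have "\<dots> = map_pmf (\<lambda>(y, f). y + (\<Sum>v\<in>F. f v)) (pair_pmf P (Pi_pmf F 0 (\<lambda>_. P)))"
  proof (intro map_pmf_cong refl)
    fix yf :: "nat \<times> ('a \<Rightarrow> nat)"
    obtain y f where yf: "yf = (y, f)" by (cases yf)
    have "(\<Sum>v\<in>F. (f(x := y)) v) = (\<Sum>v\<in>F. f v)"
      using insert by (intro sum.cong) auto
    thus "(case yf of (y, f) \<Rightarrow> \<Sum>v\<in>insert x F. (f(x := y)) v) = (case yf of (y, f) \<Rightarrow> y + (\<Sum>v\<in>F. f v))"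
      using insert yf by simp
  qed
  also have "\<dots> = conv P (map_pmf (\<lambda>c. \<Sum>v\<in>F. c v) (Pi_pmf F 0 (\<lambda>_. P)))"
    by (simp add: conv_map pair_map_pmf2 map_pmf_comp case_prod_beta')
  also have "\<dots> = Kp P (card (insert x F))"
    using insert by simp
  finally show ?case .
qed

lemma gwD:
  assumes "is_GW_tree M T p"
  shows "prob_space M" "\<And>\<omega>. \<omega> \<in> space M \<Longrightarrow> is_tree (T \<omega>)"
    "\<And>h t. {\<omega>\<in>space M. restr h (T \<omega>) = t} \<in> sets M"
    "\<And>n a. {\<omega>\<in>space M. gen n (T \<omega>) = a} \<in> sets M"
    "\<And>h t. 1 \<le> h \<Longrightarrow> is_tree t \<Longrightarrow> height_le t h \<Longrightarrow>
        measure M {\<omega>\<in>space M. restr h (T \<omega>) = t} = (\<Prod>u\<in>restr (h - 1) t. p (kids t u))"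
  using assms unfolding is_GW_tree_def by simp_all

lemma Qh_nonneg: "offspring_dist p \<Longrightarrow> 0 \<le> Qh p h t"
  unfolding Qh_def offspring_dist_def by (intro prod_nonneg) auto

lemma P_restr:
  assumes gw: "is_GW_tree M T p" and tr: "is_tree t" and ht: "height_le t h"
  shows "measure M {\<omega>\<in>space M. restr h (T \<omega>) = t} = Qh p h t"
proof (cases h)
  case 0
  interpret prob_space M using gwD(1)[OF gw] .
  have t: "t = {[]}" using tree_height0[OF tr] ht 0 by simp
  have "{\<omega>\<in>space M. restr h (T \<omega>) = t} = space M"
    using restr0 gwD(2)[OF gw] 0 t by auto
  moreover have "Qh p h t = 1" using 0 by (simp add: Qh_def)
  ultimately show ?thesis by (simp add: prob_space)
next
  case (Suc h')
  have "{u\<in>t. length u < h} = restr (h - 1) t" using Suc by (auto simp: restr_def)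
  thus ?thesis using gwD(5)[OF gw _ tr ht] Suc by (simp add: Qh_def)
qed

lemma countable_trees: "countable {s. is_tree s \<and> height_le s h}"
proof -
  have "{s. is_tree s \<and> height_le s h} \<subseteq> Collect finite" using finite_tree by auto
  thus ?thesis using countable_Collect_finite countable_subset by blast
qed

theorem tree_gen:
  assumes gw: "is_GW_tree M T p" and od: "offspring_dist p"
  shows "is_tree t \<Longrightarrow> height_le t h \<Longrightarrow>
    emeasure M {\<omega>\<in>space M. restr h (T \<omega>) = t \<and> gen (h + m) (T \<omega>) = a}
      = ennreal (Qh p h t * pmf (Gm (offp p) m (gen h t)) a)"
proof (induction m arbitrary: h t)
  interpret prob_space M using gwD(1)[OF gw] .
  case 0
  have "{\<omega>\<in>space M. restr h (T \<omega>) = t \<and> gen (h + 0) (T \<omega>) = a}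
      = (if gen h t = a then {\<omega>\<in>space M. restr h (T \<omega>) = t} else {})"
    using gen_restr[of h h] by auto
  thus ?case
    using P_restr[OF gw 0(1,2)] gwD(3)[OF gw] Qh_nonneg[OF od]
    by (simp add: emeasure_eq_measure)
next
  interpret prob_space M using gwD(1)[OF gw] .
  case (Suc m)
  let ?L = "{v\<in>t. length v = h}"
  let ?S = "{s. is_tree s \<and> height_le s (Suc h) \<and> restr h s = t}"
  let ?C = "{c :: nat list \<Rightarrow> nat. \<forall>x. x \<notin> ?L \<longrightarrow> c x = 0}"
  let ?X = "\<lambda>s. {\<omega>\<in>space M. restr (Suc h) (T \<omega>) = s \<and> gen (Suc h + m) (T \<omega>) = a}"
  let ?F = "\<lambda>y. ennreal (pmf (Gm (offp p) m y) a)"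
  let ?Pi = "Pi_pmf ?L 0 (\<lambda>_. offp p)"
  have finL: "finite ?L" using finite_tree[OF Suc(2,3)] by simp
  have E: "{\<omega>\<in>space M. restr h (T \<omega>) = t \<and> gen (h + Suc m) (T \<omega>) = a} = (\<Union>s\<in>?S. ?X s)"
  proof (intro equalityI subsetI)
    fix \<omega> assume w: "\<omega> \<in> {\<omega>\<in>space M. restr h (T \<omega>) = t \<and> gen (h + Suc m) (T \<omega>) = a}"
    hence tw: "is_tree (T \<omega>)" using gwD(2)[OF gw] by auto
    have "restr (Suc h) (T \<omega>) \<in> ?S"
      using w restr_tree[OF tw] restr_height restr_restr[of h "Suc h"] by auto
    thus "\<omega> \<in> (\<Union>s\<in>?S. ?X s)" using w by auto
  next
    fix \<omega> assume "\<omega> \<in> (\<Union>s\<in>?S. ?X s)"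
    thus "\<omega> \<in> {\<omega>\<in>space M. restr h (T \<omega>) = t \<and> gen (h + Suc m) (T \<omega>) = a}"
      using restr_restr[of h "Suc h"] by auto
  qed
  have "emeasure M (\<Union>s\<in>?S. ?X s) = (\<integral>\<^sup>+s. emeasure M (?X s) \<partial>count_space ?S)"
  proof (rule emeasure_UN_countable)
    show "\<And>s. s \<in> ?S \<Longrightarrow> ?X s \<in> sets M"
      using gwD(3,4)[OF gw] by (auto intro: sets.Int[simplified Int_def])
    show "countable ?S" by (rule countable_subset[OF _ countable_trees[of "Suc h"]]) auto
    show "disjoint_family_on ?X ?S" by (auto simp: disjoint_family_on_def)
  qed
  also have "\<dots> = (\<integral>\<^sup>+s. ennreal (Qh p (Suc h) s) * ?F (gen (Suc h) s) \<partial>count_space ?S)"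
  proof (intro nn_integral_cong)
    fix s assume "s \<in> space (count_space ?S)"
    hence s: "is_tree s" "height_le s (Suc h)" by auto
    show "emeasure M (?X s) = ennreal (Qh p (Suc h) s) * ?F (gen (Suc h) s)"
      using Suc.IH[OF s] Qh_nonneg[OF od, of "Suc h" s] by (simp add: ennreal_mult)
  qed
  also have "\<dots> = (\<integral>\<^sup>+c. ennreal (Qh p (Suc h) (ext t h c)) * ?F (gen (Suc h) (ext t h c)) \<partial>count_space ?C)"
    by (rule nn_integral_bij_count_space[OF ext_bij[OF Suc(2,3)], symmetric])
  also have "\<dots> = (\<integral>\<^sup>+c. ennreal (Qh p h t) * (ennreal (pmf ?Pi c) * ?F (\<Sum>v\<in>?L. c v)) \<partial>count_space ?C)"
  proof (intro nn_integral_cong)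
    fix c assume "c \<in> space (count_space ?C)"
    hence c: "c \<in> ?C" by simp
    have "pmf ?Pi c = (\<Prod>v\<in>?L. p (c v))"
      using c finL by (simp add: pmf_Pi pmf_offp[OF od])
    thus "ennreal (Qh p (Suc h) (ext t h c)) * ?F (gen (Suc h) (ext t h c))
        = ennreal (Qh p h t) * (ennreal (pmf ?Pi c) * ?F (\<Sum>v\<in>?L. c v))"
      using Qh_ext[OF Suc(2,3)] gen_ext[OF Suc(2,3)] Qh_nonneg[OF od, of h t]
        prod_nonneg[of ?L "\<lambda>v. p (c v)"] od
      by (simp add: ennreal_mult offspring_dist_def mult.assoc)
  qed
  also have "\<dots> = ennreal (Qh p h t) * (\<integral>\<^sup>+c. ennreal (pmf ?Pi c) * ?F (\<Sum>v\<in>?L. c v) \<partial>count_space ?C)"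
    by (rule nn_integral_cmult) simp
  also have "(\<integral>\<^sup>+c. ennreal (pmf ?Pi c) * ?F (\<Sum>v\<in>?L. c v) \<partial>count_space ?C)
      = (\<integral>\<^sup>+c. ennreal (pmf ?Pi c) * ?F (\<Sum>v\<in>?L. c v) \<partial>count_space UNIV)"
    using finL by (subst nn_integral_count_space_indicator) (auto intro!: nn_integral_cong simp: pmf_Pi indicator_def)
  also have "\<dots> = (\<integral>\<^sup>+c. ?F (\<Sum>v\<in>?L. c v) \<partial>?Pi)"
    by (simp add: nn_integral_measure_pmf)
  also have "\<dots> = (\<integral>\<^sup>+y. ?F y \<partial>map_pmf (\<lambda>c. \<Sum>v\<in>?L. c v) ?Pi)"
    by simp
  also have "\<dots> = (\<integral>\<^sup>+y. ?F y \<partial>Kp (offp p) (gen h t))"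
    using Ksum[OF finL] by (simp add: gen_def)
  also have "\<dots> = ennreal (pmf (Gm (offp p) (Suc m) (gen h t)) a)"
    by (simp add: ennreal_pmf_bind)
  finally show ?case
    using E Qh_nonneg[OF od] by (simp add: ennreal_mult)
qed



lemma kesten_restr:
  assumes K: "is_Kesten_tree N Ts V p" and od: "offspring_dist p" and m1: "offspring_mean p = 1"
    and tr: "is_tree t" and ht: "height_le t h"
  shows "measure N {\<omega>\<in>space N. restr h (Ts \<omega>) = t} = real (gen h t) * Qh p h t"
proof -
  interpret prob_space N using K by (simp add: is_Kesten_tree_def)
  have Ktr: "\<And>\<omega>. \<omega> \<in> space N \<Longrightarrow> is_tree (Ts \<omega>)" using K by (simp add: is_Kesten_tree_def)
  have Ksp: "\<And>\<omega> h. \<omega> \<in> space N \<Longrightarrow> spine (V \<omega>) h \<in> Ts \<omega>" using K by (simp add: is_Kesten_tree_def)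
  have Kset: "\<And>h t v. {\<omega>\<in>space N. restr h (Ts \<omega>) = t \<and> spine (V \<omega>) h = v} \<in> sets N"
    using K by (simp add: is_Kesten_tree_def)
  have Kf: "\<And>h t v. 1 \<le> h \<Longrightarrow> is_tree t \<Longrightarrow> height_le t h \<Longrightarrow> v \<in> t \<Longrightarrow> length v = h \<Longrightarrow>
        measure N {\<omega>\<in>space N. restr h (Ts \<omega>) = t \<and> spine (V \<omega>) h = v}
          = (\<Prod>u\<in>restr (h - 1) t.
               if u = take (length u) v
               then size_biased p (kids t u) * (1 / real (kids t u))
               else p (kids t u))"
    using K by (simp add: is_Kesten_tree_def)
  show ?thesis
  proof (cases h)
    case 0
    have t: "t = {[]}" using tree_height0[OF tr] ht 0 by simp
    have "{\<omega>\<in>space N. restr h (Ts \<omega>) = t} = space N"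
      using restr0 Ktr 0 t by auto
    moreover have "Qh p h t = 1" using 0 by (simp add: Qh_def)
    moreover have "gen h t = 1" using 0 t by (simp add: gen_def)
    ultimately show ?thesis by (simp add: prob_space)
  next
    case (Suc h')
    let ?L = "{v\<in>t. length v = h}"
    let ?A = "\<lambda>v. {\<omega>\<in>space N. restr h (Ts \<omega>) = t \<and> spine (V \<omega>) h = v}"
    have finL: "finite ?L" using finite_tree[OF tr ht] by simp
    have E: "{\<omega>\<in>space N. restr h (Ts \<omega>) = t} = (\<Union>v\<in>?L. ?A v)"
    proof (intro equalityI subsetI)
      fix \<omega> assume w: "\<omega> \<in> {\<omega>\<in>space N. restr h (Ts \<omega>) = t}"
      have len: "length (spine (V \<omega>) h) = h" by (simp add: spine_def)
      have "spine (V \<omega>) h \<in> restr h (Ts \<omega>)"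
        unfolding restr_def using Ksp[of \<omega> h] w len by auto
      with len show "\<omega> \<in> (\<Union>v\<in>?L. ?A v)" using w by auto
    qed auto
    have "measure N {\<omega>\<in>space N. restr h (Ts \<omega>) = t} = (\<Sum>v\<in>?L. measure N (?A v))"
      unfolding E using finL Kset by (intro finite_measure_finite_Union) (auto simp: disjoint_family_on_def)
    also have "\<dots> = (\<Sum>v\<in>?L. Qh p h t)"
    proof (intro sum.cong refl)
      fix v assume v: "v \<in> ?L"
      have r: "restr (h - 1) t = {u\<in>t. length u < h}" using Suc by (auto simp: restr_def)
      have "measure N (?A v) = (\<Prod>u\<in>{u\<in>t. length u < h}. p (kids t u))"
        unfolding r[symmetric]
      proof -
        have "measure N (?A v) = (\<Prod>u\<in>restr (h - 1) t.
               if u = take (length u) v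
               then size_biased p (kids t u) * (1 / real (kids t u))
               else p (kids t u))"
          using Kf[OF _ tr ht, of v] Suc v by simp
        also have "\<dots> = (\<Prod>u\<in>restr (h - 1) t. p (kids t u))"
        proof (intro prod.cong refl)
          fix u assume u: "u \<in> restr (h - 1) t"
          show "(if u = take (length u) v
               then size_biased p (kids t u) * (1 / real (kids t u))
               else p (kids t u)) = p (kids t u)"
          proof (cases "u = take (length u) v")
            case True
            have lu: "length u < length v" using u v Suc by (auto simp: restr_def)
            have "take (Suc (length u)) v = u @ [v ! length u]"
              using True lu by (metis take_Suc_conv_app_nth)
            moreover have "take (Suc (length u)) v @ drop (Suc (length u)) v \<in> t" using v by simp
            ultimately have "u @ [v ! length u] \<in> t" using tree_prefix[OF tr] by metis
            hence "1 \<le> kids t u" using kids_iff[OF tr, of u] u by (auto simp: restr_def)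
            thus ?thesis using True m1 by (simp add: size_biased_def)
          qed simp
        qed
        finally show "measure N (?A v) = (\<Prod>u\<in>restr (h - 1) t. p (kids t u))" .
      qed
      thus "measure N (?A v) = Qh p h t" using r by (simp add: Qh_def)
    qed
    also have "\<dots> = real (gen h t) * Qh p h t" by (simp add: gen_def)
    finally show ?thesis .
  qed
qed



lemma squeeze:
  fixes w :: "nat \<Rightarrow> real" and \<rho> :: "nat \<Rightarrow> nat \<Rightarrow> real"
  assumes w0: "\<And>k. 0 \<le> w k" and w1: "\<And>k. w k \<le> 1"
    and mean: "(\<lambda>k. real k * w k) sums 1"
    and tot: "eventually (\<lambda>n. \<forall>K. (\<Sum>k<K. w k * \<rho> n k) \<le> 1) sequentially"
    and low: "\<And>k \<epsilon>. \<epsilon> > 0 \<Longrightarrow> eventually (\<lambda>n. real k - \<epsilon> \<le> \<rho> n k) sequentially"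
    and pos: "w k0 > 0"
  shows "(\<lambda>n. \<rho> n k0) \<longlonglongrightarrow> real k0"
proof (rule tendstoI)
  fix e :: real assume e: "0 < e"
  define \<delta> where "\<delta> = e * w k0 / 3"
  have \<delta>: "0 < \<delta>" using e pos by (simp add: \<delta>_def)
  have "(\<lambda>K. \<Sum>k<K. real k * w k) \<longlonglongrightarrow> 1" using mean by (simp add: sums_def)
  hence "eventually (\<lambda>K. dist (\<Sum>k<K. real k * w k) 1 < \<delta>) sequentially"
    using \<delta> by (rule tendstoD)
  then obtain K0 where K0: "\<And>K. K \<ge> K0 \<Longrightarrow> dist (\<Sum>k<K. real k * w k) 1 < \<delta>"
    by (auto simp: eventually_sequentially)
  define K where "K = max K0 (Suc k0)"
  have Kk0: "k0 < K" and KK0: "K0 \<le> K" by (auto simp: K_def)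
  have sumK: "1 - \<delta> < (\<Sum>k<K. real k * w k)" using K0[OF KK0] by (auto simp: dist_real_def)
  have Kpos: "0 < real K" using Kk0 by simp
  define \<delta>' where "\<delta>' = \<delta> / real K"
  have \<delta>': "0 < \<delta>'" "\<delta>' \<le> \<delta>" "\<delta>' * real K = \<delta>"
    using \<delta> Kpos by (auto simp: \<delta>'_def field_simps)
  have ev: "eventually (\<lambda>n. \<forall>k\<in>{..<K}. real k - \<delta>' \<le> \<rho> n k) sequentially"
    using low \<delta>' by (intro eventually_ball_finite) auto
  show "eventually (\<lambda>n. dist (\<rho> n k0) (real k0) < e) sequentially"
    using ev tot
  proof eventually_elim
    case (elim n)
    have lowk: "\<And>k. k < K \<Longrightarrow> real k - \<delta>' \<le> \<rho> n k" using elim(1) by auto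
    have S1: "(\<Sum>k<K. w k * \<rho> n k) \<le> 1" using elim(2) by auto
    have "(\<Sum>k<K. w k * \<rho> n k) = (\<Sum>k<K. w k * (real k - \<delta>')) + (\<Sum>k<K. w k * (\<rho> n k - (real k - \<delta>')))"
      by (simp add: sum.distrib[symmetric] algebra_simps)
    moreover have "w k0 * (\<rho> n k0 - (real k0 - \<delta>')) \<le> (\<Sum>k<K. w k * (\<rho> n k - (real k - \<delta>')))"
      using Kk0 lowk w0 by (intro member_le_sum) auto
    moreover have "(\<Sum>k<K. w k * (real k - \<delta>')) = (\<Sum>k<K. real k * w k) - \<delta>' * (\<Sum>k<K. w k)"
      by (simp add: sum_subtractf sum_distrib_left algebra_simps)
    moreover have "(\<Sum>k<K. w k) \<le> real K"
      using sum_mono[of "{..<K}" w "\<lambda>_. 1"] w1 by simp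
    moreover have "\<delta>' * (\<Sum>k<K. w k) \<le> \<delta>' * real K"
      using \<delta>' calculation(4) by (intro mult_left_mono) auto
    ultimately have "w k0 * (\<rho> n k0 - (real k0 - \<delta>')) \<le> 2 * \<delta>"
      using S1 sumK \<delta>'(3) by linarith
    hence "w k0 * (\<rho> n k0 - real k0) \<le> 2 * \<delta>"
      using pos \<delta>' by (smt (verit, ccfv_SIG) mult_left_mono)
    hence "w k0 * (\<rho> n k0 - real k0) \<le> w k0 * (2 * e / 3)"
      by (simp add: \<delta>_def algebra_simps)
    hence up: "\<rho> n k0 - real k0 \<le> 2 * e / 3"
      using pos by (rule mult_left_le_imp_le)
    have lo: "real k0 - \<rho> n k0 \<le> e / 3"
      using lowk[OF Kk0] \<delta>'(2) w1[of k0] e unfolding \<delta>_def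
      by (smt (verit) mult_left_le divide_right_mono)
    show ?case using up lo e by (simp add: dist_real_def abs_le_iff)
  qed
qed



lemma em: "0 \<le> (a::real) \<Longrightarrow> ennreal a * ennreal b = ennreal (a * b)"
  by (simp add: ennreal_mult')

lemma tree_gen_measure:
  assumes gw: "is_GW_tree M T p" and od: "offspring_dist p" and tr: "is_tree t" and ht: "height_le t h"
  shows "measure M {\<omega>\<in>space M. restr h (T \<omega>) = t \<and> gen (h + m) (T \<omega>) = a}
      = Qh p h t * pmf (Gm (offp p) m (gen h t)) a"
  using tree_gen[OF gw od tr ht, of m a] Qh_nonneg[OF od, of h t]
  by (simp add: measure_def)

lemma is_tree_root: "is_tree {[]}"
  unfolding is_tree_def by auto

lemma gen_law:
  assumes gw: "is_GW_tree M T p" and od: "offspring_dist p"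
  shows "measure M {\<omega>\<in>space M. gen m (T \<omega>) = a} = pmf (Gm (offp p) m (Suc 0)) a"
proof -
  have "{\<omega>\<in>space M. gen m (T \<omega>) = a} = {\<omega>\<in>space M. restr 0 (T \<omega>) = {[]} \<and> gen (0 + m) (T \<omega>) = a}"
    using restr0 gwD(2)[OF gw] by auto
  moreover have "height_le {[]} 0" by (simp add: height_le_def)
  moreover have "gen 0 {[]} = 1" by (simp add: gen_def)
  ultimately show ?thesis
    using tree_gen_measure[OF gw od is_tree_root, of 0 m a] by (simp add: Qh_def)
qed

lemma offp_mean:
  assumes od: "offspring_dist p" and m1: "offspring_mean p = 1"
  shows "(\<integral>\<^sup>+x. ennreal (real x) \<partial>offp p) = 1"
proof -
  have nn: "\<And>n. 0 \<le> p n" and sm: "summable (\<lambda>n. real n * p n)" using od by (auto simp: offspring_dist_def)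
  have s: "(\<lambda>n. real n * p n) sums 1" using sm m1 by (simp add: offspring_mean_def summable_sums_iff)
  have "(\<integral>\<^sup>+x. ennreal (real x) \<partial>offp p) = (\<integral>\<^sup>+x. ennreal (real x * p x) \<partial>count_space UNIV)"
    unfolding nn_integral_measure_pmf
    by (intro nn_integral_cong) (simp add: pmf_offp[OF od] em nn mult.commute)
  also have "\<dots> = ennreal 1"
  proof -
    have nn2: "\<And>n. 0 \<le> real n * p n" using nn by simp
    show ?thesis using suminf_ennreal_eq[OF nn2 s] by (simp add: nn_integral_count_space_nat)
  qed
  finally show ?thesis by simp
qed

lemma w_sums:
  fixes P :: "nat pmf"
  assumes "(\<integral>\<^sup>+x. ennreal (real x) \<partial>P) = 1"
  shows "(\<lambda>k. real k * pmf (Gm P h (Suc 0)) k) sums 1"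
proof -
  let ?f = "\<lambda>k. real k * pmf (Gm P h (Suc 0)) k"
  have "(\<Sum>k. ennreal (?f k)) = ennreal 1"
  proof -
    have "(\<integral>\<^sup>+x. ennreal (real x) \<partial>Gm P h (Suc 0)) = (\<integral>\<^sup>+k. ennreal (?f k) \<partial>count_space UNIV)"
      unfolding nn_integral_measure_pmf by (intro nn_integral_cong) (simp add: em mult.commute)
    thus ?thesis using Gm_mean[OF assms, of h "Suc 0"] by (simp add: nn_integral_count_space_nat)
  qed
  hence "(\<lambda>k. ennreal (?f k)) sums ennreal 1"
    using summable_sums[OF summableI, of "\<lambda>k. ennreal (?f k)"] by simp
  thus ?thesis by (subst (asm) sums_ennreal) auto
qed

lemma decomp:
  fixes P :: "nat pmf"
  shows "(\<Sum>k<K. pmf (Gm P h (Suc 0)) k * pmf (Gm P m k) a) \<le> pmf (Gm P (h + m) (Suc 0)) a"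
proof -
  let ?f = "\<lambda>k. pmf (Gm P h (Suc 0)) k * pmf (Gm P m k) a"
  have "ennreal (pmf (Gm P (h + m) (Suc 0)) a) = (\<integral>\<^sup>+k. pmf (Gm P m k) a \<partial>Gm P h (Suc 0))"
    by (simp add: Gm_semi ennreal_pmf_bind)
  also have "\<dots> = (\<integral>\<^sup>+k. ennreal (?f k) \<partial>count_space UNIV)"
    unfolding nn_integral_measure_pmf by (intro nn_integral_cong) (simp add: em)
  also have "\<dots> = (\<Sum>k. ennreal (?f k))"
    by (simp add: nn_integral_count_space_nat)
  finally have e: "ennreal (pmf (Gm P (h + m) (Suc 0)) a) = (\<Sum>k. ennreal (?f k))" .
  have "ennreal (\<Sum>k<K. ?f k) = (\<Sum>k<K. ennreal (?f k))" by (rule sum_ennreal[symmetric]) simp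
  also have "\<dots> \<le> (\<Sum>k. ennreal (?f k))" by (intro sum_le_suminf summableI) auto
  finally have "ennreal (\<Sum>k<K. ?f k) \<le> ennreal (pmf (Gm P (h + m) (Suc 0)) a)" using e by simp
  thus ?thesis by (simp add: ennreal_le_iff)
qed



theorem proposition6p1:
  fixes M :: "'a measure" and T :: "'a \<Rightarrow> tree"
    and N :: "'b measure" and Ts :: "'b \<Rightarrow> tree" and V :: "'b \<Rightarrow> nat \<Rightarrow> nat"
    and p :: "nat \<Rightarrow> real" and \<alpha> :: "nat \<Rightarrow> nat"
  assumes "offspring_dist p"
    and "offspring_mean p = 1"
    and "is_GW_tree M T p"
    and "is_Kesten_tree N Ts V p"
    and "\<And>n. 1 \<le> \<alpha> n"
    and "\<And>j. 1 \<le> j \<Longrightarrow>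
           (\<lambda>n. measure M {\<omega>\<in>space M. gen (n - j) (T \<omega>) = \<alpha> n}
                / measure M {\<omega>\<in>space M. gen n (T \<omega>) = \<alpha> n}) \<longlonglongrightarrow> 1"
  shows "\<forall>h t. is_tree t \<longrightarrow>
           (\<lambda>n. measure M {\<omega>\<in>space M. restr h (T \<omega>) = t \<and> gen n (T \<omega>) = \<alpha> n}
                / measure M {\<omega>\<in>space M. gen n (T \<omega>) = \<alpha> n})
           \<longlonglongrightarrow> measure N {\<omega>\<in>space N. restr h (Ts \<omega>) = t}"
proof (intro allI impI)
  note od = assms(1) and m1 = assms(2) and gw = assms(3) and K = assms(4)
  interpret prob_space M using gwD(1)[OF gw] .
  fix h t assume tr: "is_tree t"
  define P where "P = offp p"
  define g where "g m a = pmf (Gm P m (Suc 0)) a" for m a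
  define D where "D n = g n (\<alpha> n)" for n
  have gl: "\<And>m a. measure M {\<omega>\<in>space M. gen m (T \<omega>) = a} = g m a"
    unfolding g_def P_def by (rule gen_law[OF gw od])
  have hyp: "\<And>j. 1 \<le> j \<Longrightarrow> (\<lambda>n. g (n - j) (\<alpha> n) / D n) \<longlonglongrightarrow> 1"
    using assms(6) unfolding gl D_def by simp
  have Pmean: "(\<integral>\<^sup>+x. ennreal (real x) \<partial>P) = 1" unfolding P_def by (rule offp_mean[OF od m1])
  have nd: "pmf P 0 + pmf P 1 < 1" using od by (simp add: P_def pmf_offp offspring_dist_def)
  have ext: "(\<lambda>m. g m 0) \<longlonglongrightarrow> 1" unfolding g_def by (rule extinction[OF Pmean nd])
  have D0: "\<And>n. 0 \<le> D n" by (simp add: D_def g_def)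
  show "(\<lambda>n. measure M {\<omega>\<in>space M. restr h (T \<omega>) = t \<and> gen n (T \<omega>) = \<alpha> n}
                / measure M {\<omega>\<in>space M. gen n (T \<omega>) = \<alpha> n})
           \<longlonglongrightarrow> measure N {\<omega>\<in>space N. restr h (Ts \<omega>) = t}"
  proof (cases "height_le t h")
    case False
    have e1: "{\<omega>\<in>space M. restr h (T \<omega>) = t \<and> gen n (T \<omega>) = \<alpha> n} = {}" for n
      using restr_height[of h] False by auto
    have e2: "{\<omega>\<in>space N. restr h (Ts \<omega>) = t} = {}"
      using restr_height[of h] False by auto
    show ?thesis unfolding e1 e2 by simp
  next
    case ht: True
    define k0 where "k0 = gen h t"
    define Q where "Q = Qh p h t"
    define \<rho> where "\<rho> n k = pmf (Gm P (n - h) k) (\<alpha> n) / D n" for n k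
    have RHS: "measure N {\<omega>\<in>space N. restr h (Ts \<omega>) = t} = real k0 * Q"
      unfolding k0_def Q_def by (rule kesten_restr[OF K od m1 tr ht])
    have LHS: "eventually (\<lambda>n. measure M {\<omega>\<in>space M. restr h (T \<omega>) = t \<and> gen n (T \<omega>) = \<alpha> n}
                / measure M {\<omega>\<in>space M. gen n (T \<omega>) = \<alpha> n} = Q * \<rho> n k0) sequentially"
      using eventually_ge_at_top[of h]
    proof eventually_elim
      case (elim n)
      have "measure M {\<omega>\<in>space M. restr h (T \<omega>) = t \<and> gen (h + (n - h)) (T \<omega>) = \<alpha> n}
          = Q * pmf (Gm P (n - h) k0) (\<alpha> n)"
        unfolding Q_def k0_def P_def by (rule tree_gen_measure[OF gw od tr ht])
      thus ?case using elim by (simp add: gl \<rho>_def D_def)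
    qed
    have Q0: "0 \<le> Q" unfolding Q_def by (rule Qh_nonneg[OF od])
    show ?thesis
    proof (cases "Q = 0")
      case True
      have "(\<lambda>n. Q * \<rho> n k0) \<longlonglongrightarrow> real k0 * Q" using True by simp
      thus ?thesis using LHS RHS by (subst tendsto_cong) auto
    next
      case False
      hence Qpos: "0 < Q" using Q0 by simp
      define w where "w k = g h k" for k
      have wk0: "Q \<le> w k0"
      proof -
        have "{\<omega>\<in>space M. restr h (T \<omega>) = t} \<subseteq> {\<omega>\<in>space M. gen h (T \<omega>) = k0}"
          unfolding k0_def using gen_restr[of h h] by auto
        hence "measure M {\<omega>\<in>space M. restr h (T \<omega>) = t} \<le> measure M {\<omega>\<in>space M. gen h (T \<omega>) = k0}"
          using gwD(4)[OF gw] by (intro finite_measure_mono) auto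
        thus ?thesis using P_restr[OF gw tr ht] gl unfolding w_def Q_def by simp
      qed
      have lim: "(\<lambda>n. \<rho> n k0) \<longlonglongrightarrow> real k0"
      proof (rule squeeze[where w=w])
        show "\<And>k. 0 \<le> w k" "\<And>k. w k \<le> 1" by (simp_all add: w_def g_def pmf_le_1)
        show "(\<lambda>k. real k * w k) sums 1" unfolding w_def g_def by (rule w_sums[OF Pmean])
        show "0 < w k0" using wk0 Qpos by simp
        show "eventually (\<lambda>n. \<forall>K. (\<Sum>k<K. w k * \<rho> n k) \<le> 1) sequentially"
          using eventually_ge_at_top[of h]
        proof eventually_elim
          case (elim n)
          show ?case
          proof
            fix K
            have "(\<Sum>k<K. w k * \<rho> n k) = (\<Sum>k<K. w k * pmf (Gm P (n - h) k) (\<alpha> n)) / D n"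
              by (simp add: \<rho>_def sum_divide_distrib)
            also have "\<dots> \<le> D n / D n"
              using decomp[where K=K and P=P and h=h and m="n - h" and a="\<alpha> n"] elim D0
              by (intro divide_right_mono) (auto simp: w_def g_def D_def)
            also have "\<dots> \<le> 1" by (cases "D n = 0") auto
            finally show "(\<Sum>k<K. w k * \<rho> n k) \<le> 1" .
          qed
        qed
        fix k :: nat and \<epsilon> :: real assume \<epsilon>: "0 < \<epsilon>"
        define r where "r n = g (n - h) (\<alpha> n) / D n" for n
        have rlim: "r \<longlonglongrightarrow> 1"
        proof (cases h)
          case 0
          have "eventually (\<lambda>n. g (n - 1) (\<alpha> n) / D n > 0) sequentially"
            using hyp[of 1] by (intro order_tendstoD) auto
          hence "eventually (\<lambda>n. r n = 1) sequentially"
            by eventually_elim (auto simp: r_def 0 D_def)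
          thus ?thesis by (subst tendsto_cong) auto
        next
          case (Suc h')
          thus ?thesis unfolding r_def using hyp[of h] by simp
        qed
        have zlim: "(\<lambda>n. g (n - h) 0) \<longlonglongrightarrow> 1"
          by (rule LIMSEQ_offset[where k=h]) (simp add: ext)
        have "(\<lambda>n. real k * r n * g (n - h) 0 ^ (k - 1)) \<longlonglongrightarrow> real k * 1 * 1 ^ (k - 1)"
          by (intro tendsto_intros rlim zlim)
        hence ev: "eventually (\<lambda>n. real k - \<epsilon> < real k * r n * g (n - h) 0 ^ (k - 1)) sequentially"
          using \<epsilon> by (intro order_tendstoD) auto
        show "eventually (\<lambda>n. real k - \<epsilon> \<le> \<rho> n k) sequentially"
          using ev
        proof eventually_elim
          case (elim n)
          have an: "\<alpha> n \<noteq> 0" using assms(5)[of n] by simp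
          have "real k * g (n - h) (\<alpha> n) * g (n - h) 0 ^ (k - 1) \<le> pmf (Gm P (n - h) k) (\<alpha> n)"
            unfolding g_def by (rule Gm_lower[OF an])
          hence "real k * g (n - h) (\<alpha> n) * g (n - h) 0 ^ (k - 1) / D n \<le> \<rho> n k"
            unfolding \<rho>_def using D0 by (intro divide_right_mono)
          moreover have "real k * g (n - h) (\<alpha> n) * g (n - h) 0 ^ (k - 1) / D n
              = real k * r n * g (n - h) 0 ^ (k - 1)" by (simp add: r_def)
          ultimately show ?case using elim by simp
        qed
      qed
      hence "(\<lambda>n. Q * \<rho> n k0) \<longlonglongrightarrow> Q * real k0" by (intro tendsto_mult_left)
      thus ?thesis using LHS RHS by (subst tendsto_cong) (auto simp: mult.commute)
    qed
  qed
qed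

end
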